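(* Let $\epsilon\in(0,1)$ and let $\ell\ge 0$ be an integer. Set $$m=\left\lceil \log_2\!\left(\left\lceil 175\left(\ln(10/\epsilon)+1\right)^2\right\rceil+1\right)\right\rceil+1,\qquad N=2^{\ell+m},\qquad K=2^{m-1}-1 .$$ Then the largest eigenvalue $\lambda_{\max}$ of the $N\times N$ DPSS kernel $C_{N,K}$ satisfies $\lambda_{\max}\ge 1-\epsilon$. Equivalently, the DPSS taper $\phi$ (a unit eigenvector of $C_{N,K}$ for $\lambda_{\max}$) has average success probability $\bar P_K(\phi)\ge 1-\epsilon$, i.e. the tapered phase-estimation procedure with this taper outputs one of the $2K+1=2^m-1$ grid estimates $k/N$ closest to the true phase with average probability at least $1-\epsilon$.
   Context: For $N\in\mathbb N$, a taper is a unit vector $\phi=(\phi[0],\dots,\phi[N-1])\in\mathbb C^N$, with discrete-time Fourier transform $\hat\phi(f)=N^{-1/2}\sum_{n=0}^{N-1}\phi[n]e^{2\pi i n f}$ for $f\in\mathbb R$. For an integer $K\ge0$ with $2K+1\le N$ and $\Delta\in\mathbb R$, the success probability is $P_{K,\Delta}(\phi)=\sum_{j=-K}^{K}|\hat\phi(\Delta+j/N)|^2$, and the average success probability is $\bar P_K(\phi)=N\int_{-1/(2N)}^{1/(2N)}P_{K,\Delta}(\phi)\,d\Delta$ (the expectation over $\Delta$ uniform on $[-\tfrac1{2N},\tfrac1{2N}]$). The DPSS kernel $C_{N,K}$ is the real symmetric $N\times N$ matrix indexed by $m,n\in\{0,\dots,N-1\}$ with $C_{N,K}[m,n]=\frac{\sin(\pi(m-n)(2K+1)/N)}{\pi(m-n)}$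 for $m\ne n$ and $C_{N,K}[m,m]=(2K+1)/N$. Here $\ln$ is the natural logarithm. *)

theory Defs
  imports Complex_Main "Jordan_Normal_Form.Char_Poly"
begin

definition dpss_kernel :: "nat \<Rightarrow> nat \<Rightarrow> real mat" where
  "dpss_kernel N K = mat N N (\<lambda>(m, n).
     if m = n then (2 * real K + 1) / real N
     else sin (pi * (real m - real n) * (2 * real K + 1) / real N) / (pi * (real m - real n)))"

definition lambda_max :: "real mat \<Rightarrow> real" where
  "lambda_max A = Max {lam. eigenvalue A lam}"

end

theory Submission
  imports Defs "HOL-Analysis.Function_Topology" "HOL-Analysis.Convex"
begin


lemma sphere_compact:
  "compact {x::nat\<Rightarrow>real. (\<forall>i. x i \<in> (if i < n then {-1..1} else {0})) \<and> (\<Sum>i<n. x i ^ 2) = 1}"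
proof -
  let ?T = "\<lambda>i::nat. if i < n then {-1..1::real} else {0}"
  have "compactin (product_topology (\<lambda>_. euclidean) UNIV) (PiE UNIV ?T)"
    by (subst compactin_PiE) auto
  hence c1: "compact (PiE UNIV ?T)" by (simp add: euclidean_product_topology)
  have cc: "\<And>i. continuous_on UNIV (\<lambda>x::nat\<Rightarrow>real. x i)" by simp
  have "continuous_on UNIV (\<lambda>x::nat\<Rightarrow>real. \<Sum>i<n. x i ^ 2)"
    by (intro continuous_intros cc)
  hence c2: "closed {x::nat\<Rightarrow>real. (\<Sum>i<n. x i ^ 2) = 1}"
    using closed_Collect_eq[of "\<lambda>x::nat\<Rightarrow>real. \<Sum>i<n. x i ^ 2" "\<lambda>_. 1"]
    by (simp add: continuous_on_const)
  have eq: "{x::nat\<Rightarrow>real. (\<forall>i. x i \<in> ?T i) \<and> (\<Sum>i<n. x i ^ 2) = 1}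
     = PiE UNIV ?T \<inter> {x. (\<Sum>i<n. x i ^ 2) = 1}"
    by (auto simp: PiE_def Pi_def)
  show ?thesis unfolding eq using compact_Int_closed[OF c1 c2] by simp
qed



definition bform :: "nat \<Rightarrow> (nat \<Rightarrow> nat \<Rightarrow> real) \<Rightarrow> (nat \<Rightarrow> real) \<Rightarrow> (nat \<Rightarrow> real) \<Rightarrow> real" where
  "bform n a x z = (\<Sum>i<n. \<Sum>j<n. a i j * x i * z j)"

definition ipn :: "nat \<Rightarrow> (nat \<Rightarrow> real) \<Rightarrow> (nat \<Rightarrow> real) \<Rightarrow> real" where
  "ipn n x z = (\<Sum>i<n. x i * z i)"

lemma bform_expand:
  "bform n a (\<lambda>i. x i + t * z i) (\<lambda>i. x i + t * z i)
   = bform n a x x + t * bform n a x z + t * bform n a z x + t^2 * bform n a z z"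
proof -
  have "\<And>i j. a i j * (x i + t*z i) * (x j + t*z j) = a i j*x i*x j + t*(a i j*x i*z j) + t*(a i j*z i*x j) + t^2*(a i j*z i*z j)"
    by (simp add: algebra_simps power2_eq_square)
  then show ?thesis unfolding bform_def
    by (simp add: sum.distrib sum_distrib_left)
qed

lemma ipn_expand:
  "ipn n (\<lambda>i. x i + t * z i) (\<lambda>i. x i + t * z i)
   = ipn n x x + 2 * t * ipn n x z + t^2 * ipn n z z"
proof -
  have "\<And>i. (x i + t*z i) * (x i + t*z i) = x i * x i + 2 * t * (x i * z i) + t^2 * (z i * z i)"
    by (simp add: algebra_simps power2_eq_square)
  then show ?thesis unfolding ipn_def
    by (simp add: sum.distrib sum_distrib_left)
qed

lemma bform_sym:
  assumes "\<forall>i<n. \<forall>j<n. a i j = a j i"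
  shows "bform n a z x = bform n a x z"
proof -
  have "bform n a z x = (\<Sum>j<n. \<Sum>i<n. a i j * z i * x j)" unfolding bform_def by (rule sum.swap)
  also have "\<dots> = bform n a x z" unfolding bform_def
    by (intro sum.cong refl) (use assms in \<open>auto simp: mult_ac\<close>)
  finally show ?thesis .
qed

lemma bform_eq_row:
  assumes "\<forall>i<n. \<forall>j<n. a i j = a j i"
  shows "bform n a y w = (\<Sum>j<n. w j * (\<Sum>i<n. a j i * y i))"
proof -
  have "bform n a y w = (\<Sum>j<n. \<Sum>i<n. a i j * y i * w j)" unfolding bform_def by (rule sum.swap)
  also have "\<dots> = (\<Sum>j<n. w j * (\<Sum>i<n. a j i * y i))"
    by (intro sum.cong refl) (use assms in \<open>auto simp: mult_ac sum_distrib_left\<close>)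
  finally show ?thesis .
qed

lemma ipn_nonneg: "ipn n x x \<ge> 0" unfolding ipn_def by (intro sum_nonneg) auto

lemma ipn_zero: "ipn n x x = 0 \<Longrightarrow> i < n \<Longrightarrow> x i = 0"
  unfolding ipn_def by (subst (asm) sum_nonneg_eq_0_iff) auto

lemma bform_cong: "(\<And>i. i < n \<Longrightarrow> x i = x' i) \<Longrightarrow> bform n a x x = bform n a x' x'"
  unfolding bform_def by (intro sum.cong refl) auto

lemma rayleigh_max:
  fixes a :: "nat \<Rightarrow> nat \<Rightarrow> real"
  assumes sym: "\<forall>i<n. \<forall>j<n. a i j = a j i" and n: "n > 0"
  shows "\<exists>y \<mu>. ipn n y y = 1 \<and> (\<forall>j<n. (\<Sum>i<n. a j i * y i) = \<mu> * y j)
          \<and> (\<forall>x. bform n a x x \<le> \<mu> * ipn n x x)"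
proof -
  define S where "S = {x::nat\<Rightarrow>real. (\<forall>i. x i \<in> (if i < n then {-1..1} else {0})) \<and> (\<Sum>i<n. x i ^ 2) = 1}"
  have cS: "compact S" unfolding S_def by (rule sphere_compact)
  have e0: "(\<lambda>i. if i = 0 then 1 else 0::real) \<in> S" unfolding S_def using n
    by (auto simp: power2_eq_square if_distrib[where f="\<lambda>x. x*_"] cong: if_cong)
  have cc: "\<And>i. continuous_on UNIV (\<lambda>x::nat\<Rightarrow>real. x i)" by simp
  have "continuous_on UNIV (\<lambda>x. bform n a x x)" unfolding bform_def
    by (intro continuous_intros cc)
  hence "continuous_on S (\<lambda>x. bform n a x x)" by (rule continuous_on_subset) auto
  then obtain y where yS: "y \<in> S" and ymax: "\<And>z. z \<in> S \<Longrightarrow> bform n a z z \<le> bform n a y y"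
    using continuous_attains_sup[OF cS _] e0 by blast
  define \<mu> where "\<mu> = bform n a y y"
  have ny: "ipn n y y = 1" using yS unfolding S_def ipn_def by (simp add: power2_eq_square)
  have glob: "bform n a x x \<le> \<mu> * ipn n x x" for x
  proof (cases "ipn n x x = 0")
    case True
    hence "bform n a x x = bform n a (\<lambda>_. 0) (\<lambda>_. 0)" using ipn_zero[OF True]
      by (intro bform_cong) auto
    then show ?thesis using True by (simp add: bform_def)
  next
    case False
    define s where "s = sqrt (ipn n x x)"
    have s0: "s > 0" using False ipn_nonneg[of n x] unfolding s_def by auto
    have ss: "s^2 = ipn n x x" unfolding s_def using ipn_nonneg[of n x] by simp
    define z where "z = (\<lambda>i. if i < n then x i / s else 0)"
    have nz: "ipn n z z = 1"
    proof -
      have "ipn n z z = (\<Sum>i<n. x i * x i / s^2)" unfolding ipn_def z_def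
        by (intro sum.cong refl) (simp add: power2_eq_square)
      also have "\<dots> = ipn n x x / s^2" unfolding ipn_def by (simp add: sum_divide_distrib)
      finally show ?thesis using ss False by simp
    qed
    have zS: "z \<in> S"
    proof -
      have "z i \<in> {-1..1}" if "i < n" for i
      proof -
        have "z i ^2 \<le> (\<Sum>i<n. z i ^ 2)"
          using that by (intro member_le_sum) auto
        also have "\<dots> = 1" using nz unfolding ipn_def by (simp add: power2_eq_square)
        finally have "z i ^ 2 \<le> 1 ^ 2" by simp
        hence "\<bar>z i\<bar> \<le> 1" using abs_le_square_iff by (metis abs_one)
        thus ?thesis by auto
      qed
      moreover have "(\<Sum>i<n. z i ^ 2) = 1" using nz unfolding ipn_def by (simp add: power2_eq_square)
      ultimately show ?thesis unfolding S_def by (auto simp: z_def)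
    qed
    have "bform n a z z = (\<Sum>i<n. \<Sum>j<n. a i j * x i * x j / s^2)" unfolding bform_def z_def
      by (intro sum.cong refl) (simp add: power2_eq_square)
    also have "\<dots> = bform n a x x / s^2" unfolding bform_def by (simp add: sum_divide_distrib)
    finally have "bform n a x x = s^2 * bform n a z z" using s0 by simp
    also have "\<dots> \<le> s^2 * \<mu>" using ymax[OF zS] unfolding \<mu>_def by (simp add: mult_left_mono)
    finally show ?thesis using ss by (simp add: mult.commute)
  qed
  define w where "w = (\<lambda>j. (\<Sum>i<n. a j i * y i) - \<mu> * y j)"
  have byw: "bform n a y w = ipn n w w + \<mu> * ipn n y w"
  proof -
    have "bform n a y w = (\<Sum>j<n. w j * (\<Sum>i<n. a j i * y i))" by (rule bform_eq_row[OF sym])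
    also have "\<dots> = (\<Sum>j<n. w j * w j + \<mu> * (y j * w j))"
      by (intro sum.cong refl) (simp add: w_def algebra_simps)
    finally show ?thesis unfolding ipn_def by (simp add: sum.distrib sum_distrib_left)
  qed
  have key: "2 * t * ipn n w w \<le> t^2 * (\<mu> * ipn n w w - bform n a w w)" for t
  proof -
    have "bform n a (\<lambda>i. y i + t * w i) (\<lambda>i. y i + t * w i) \<le> \<mu> * ipn n (\<lambda>i. y i + t * w i) (\<lambda>i. y i + t * w i)"
      by (rule glob)
    thus ?thesis unfolding bform_expand ipn_expand bform_sym[OF sym, of w y] byw ny \<mu>_def[symmetric]
      by (simp add: algebra_simps)
  qed
  have w0: "ipn n w w = 0"
  proof (rule ccontr)
    assume "ipn n w w \<noteq> 0"
    hence wp: "ipn n w w > 0" using ipn_nonneg[of n w] by linarith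
    define D where "D = \<mu> * ipn n w w - bform n a w w"
    have D0: "D \<ge> 0" using glob[of w] unfolding D_def by simp
    define t where "t = ipn n w w / (D + 1)"
    have t0: "t > 0" unfolding t_def using wp D0 by simp
    have "2 * t * ipn n w w \<le> t^2 * D" using key[of t] unfolding D_def .
    hence "2 * ipn n w w \<le> t * D" using t0 by (simp add: power2_eq_square)
    also have "t * D = ipn n w w * (D / (D+1))" unfolding t_def by simp
    also have "\<dots> \<le> ipn n w w * 1" using D0 wp by (intro mult_left_mono) auto
    finally show False using wp by simp
  qed
  have "\<forall>j<n. (\<Sum>i<n. a j i * y i) = \<mu> * y j"
    using ipn_zero[OF w0] unfolding w_def by auto
  thus ?thesis using ny glob by blast
qed



lemma lambda_max_ge:
  assumes A: "(A::real mat) \<in> carrier_mat n n" and ev: "eigenvalue A \<mu>"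
  shows "\<mu> \<le> lambda_max A"
proof -
  have "char_poly A \<noteq> 0" using degree_monic_char_poly[OF A] by auto
  hence "finite {lam. poly (char_poly A) lam = 0}" by (rule poly_roots_finite)
  hence fin: "finite {lam. eigenvalue A lam}" using eigenvalue_root_char_poly[OF A] by simp
  show ?thesis unfolding lambda_max_def using fin ev by (intro Max_ge) auto
qed

lemma rayleigh_eig:
  assumes A: "(A::real mat) \<in> carrier_mat n n" and n: "n > 0"
    and sym: "\<forall>i<n. \<forall>j<n. A $$ (i,j) = A $$ (j,i)"
    and xp: "ipn n x x > 0"
  shows "bform n (\<lambda>i j. A $$ (i,j)) x x / ipn n x x \<le> lambda_max A"
proof -
  obtain y \<mu> where ny: "ipn n y y = 1" and eig: "\<forall>j<n. (\<Sum>i<n. A $$ (j,i) * y i) = \<mu> * y j"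
    and glob: "\<forall>x. bform n (\<lambda>i j. A $$ (i,j)) x x \<le> \<mu> * ipn n x x"
    using rayleigh_max[of n "\<lambda>i j. A $$ (i,j)"] sym n by blast
  define v where "v = vec n y"
  have vc: "v \<in> carrier_vec n" unfolding v_def by simp
  have vnz: "v \<noteq> 0\<^sub>v n"
  proof
    assume "v = 0\<^sub>v n"
    hence "\<forall>i<n. y i = 0" unfolding v_def by (metis index_vec index_zero_vec(1))
    hence "ipn n y y = 0" unfolding ipn_def by simp
    thus False using ny by simp
  qed
  have "A *\<^sub>v v = \<mu> \<cdot>\<^sub>v v"
  proof (rule eq_vecI)
    fix j assume j: "j < dim_vec (\<mu> \<cdot>\<^sub>v v)"
    hence jn: "j < n" unfolding v_def by simp
    have "(A *\<^sub>v v) $ j = row A j \<bullet> v" using A jn by simp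
    also have "\<dots> = (\<Sum>i<n. A $$ (j,i) * y i)" unfolding scalar_prod_def v_def using A jn
      by (auto intro!: sum.cong simp: lessThan_atLeast0)
    also have "\<dots> = (\<mu> \<cdot>\<^sub>v v) $ j" using eig jn unfolding v_def by simp
    finally show "(A *\<^sub>v v) $ j = (\<mu> \<cdot>\<^sub>v v) $ j" .
  qed (use A in \<open>simp add: v_def\<close>)
  hence "eigenvector A v \<mu>" unfolding eigenvector_def using vc vnz A by simp
  hence "eigenvalue A \<mu>" unfolding eigenvalue_def by blast
  hence "\<mu> \<le> lambda_max A" by (rule lambda_max_ge[OF A])
  moreover have "bform n (\<lambda>i j. A $$ (i,j)) x x / ipn n x x \<le> \<mu>"
    using glob xp by (simp add: divide_le_eq)
  ultimately show ?thesis by linarith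
qed



lemma sin_ge_xcos: assumes "0 \<le> x" "x \<le> pi/2" shows "x * cos x \<le> sin x"
proof -
  have "(\<lambda>t. sin t - t * cos t) 0 \<le> (\<lambda>t. sin t - t * cos t) x"
  proof (rule DERIV_nonneg_imp_nondecreasing[OF assms(1)])
    fix t assume t: "0 \<le> t" "t \<le> x"
    have "((\<lambda>t. sin t - t * cos t) has_real_derivative t * sin t) (at t)"
      by (auto intro!: derivative_eq_intros simp: algebra_simps)
    moreover have "t * sin t \<ge> 0" using t assms by (intro mult_nonneg_nonneg sin_ge_zero) auto
    ultimately show "\<exists>y. ((\<lambda>t. sin t - t * cos t) has_real_derivative y) (at t) \<and> 0 \<le> y" by blast
  qed
  thus ?thesis by simp
qed

lemma jordan: assumes "0 \<le> x" "x \<le> pi/2" shows "2 / pi * x \<le> sin x"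
proof (cases "x = 0")
  case True thus ?thesis by simp
next
  case False
  hence x0: "x > 0" using assms by simp
  have "(\<lambda>t. sin t / t) (pi/2) \<le> (\<lambda>t. sin t / t) x"
  proof (rule DERIV_nonpos_imp_nonincreasing[OF assms(2)])
    fix t assume t: "x \<le> t" "t \<le> pi/2"
    hence t0: "t > 0" using x0 by simp
    have "((\<lambda>t. sin t / t) has_real_derivative (cos t * t - sin t) / t^2) (at t)"
      using t0 by (auto intro!: derivative_eq_intros simp: power2_eq_square)
    moreover have "(cos t * t - sin t) / t^2 \<le> 0"
      using sin_ge_xcos[of t] t t0 by (intro divide_nonpos_pos) (auto simp: mult.commute)
    ultimately show "\<exists>y. ((\<lambda>t. sin t / t) has_real_derivative y) (at t) \<and> y \<le> 0" by blast
  qed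
  hence "2 / pi \<le> sin x / x" by simp
  thus ?thesis using x0 by (simp add: le_divide_eq mult.commute)
qed

lemma sin_pi_ge: assumes "0 \<le> f" "f \<le> 1/2" shows "2 * f \<le> sin (pi * f)"
  using jordan[of "pi * f"] assms by (simp add: field_simps)

lemma cmod_one_minus_cis:
  "cmod (1 - cis (2 * pi * f)) = 2 * \<bar>sin (pi * f)\<bar>"
proof -
  have "cmod (1 - cis (2 * pi * f)) ^ 2 = (1 - cos (2*pi*f))^2 + (sin (2*pi*f))^2"
    by (simp add: cmod_power2)
  also have "\<dots> = 2 - 2 * cos (2 * (pi * f))"
    by (simp add: power2_eq_square algebra_simps sin_squared_eq)
  also have "\<dots> = (2 * \<bar>sin (pi * f)\<bar>)^2" by (simp add: cos_double_sin power2_eq_square)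
  finally have e: "cmod (1 - cis (2 * pi * f)) ^ 2 = (2 * \<bar>sin (pi * f)\<bar>)^2" .
  show ?thesis using power2_eq_iff_nonneg[of "cmod (1 - cis (2 * pi * f))" "2 * \<bar>sin (pi * f)\<bar>"] e by simp
qed

lemma dirichlet_bound:
  assumes "0 < f" "f \<le> 1/2"
  shows "cmod (\<Sum>k<M. cis (2 * pi * f) ^ k) \<le> 1 / (2 * f)"
proof -
  let ?z = "cis (2 * pi * f)"
  have "(1 - ?z) * (\<Sum>k<M. ?z ^ k) = 1 - ?z ^ M"
    by (simp add: one_diff_power_eq)
  hence "cmod (1 - ?z) * cmod (\<Sum>k<M. ?z ^ k) = cmod (1 - ?z ^ M)" by (metis norm_mult)
  also have "\<dots> \<le> cmod 1 + cmod (?z ^ M)" by (rule norm_triangle_ineq4)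
  also have "\<dots> = 2" by (simp add: norm_power)
  finally have a: "cmod (1 - ?z) * cmod (\<Sum>k<M. ?z ^ k) \<le> 2" .
  have b: "cmod (1 - ?z) \<ge> 4 * f" unfolding cmod_one_minus_cis using sin_pi_ge[OF _ assms(2)] assms by simp
  have "4 * f * cmod (\<Sum>k<M. ?z ^ k) \<le> 2"
    using a b by (meson mult_right_mono norm_ge_zero order_trans)
  thus ?thesis using assms by (simp add: field_simps)
qed



definition Sf :: "real \<Rightarrow> real \<Rightarrow> real" where
  "Sf d f = (if d = 0 then f else sin (2*pi*d*f) / (2*pi*d))"

lemma Sf_deriv: "((\<lambda>f. Sf d f) has_real_derivative cos (2*pi*d*f)) (at f)"
proof (cases "d = 0")
  case True thus ?thesis unfolding Sf_def by (auto intro!: derivative_eq_intros)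
next
  case False
  have "((\<lambda>f. sin (2*pi*d*f) / (2*pi*d)) has_real_derivative cos (2*pi*d*f)) (at f)"
    using False by (auto intro!: derivative_eq_intros)
  thus ?thesis unfolding Sf_def using False by simp
qed

definition hf :: "nat \<Rightarrow> (nat \<Rightarrow> real) \<Rightarrow> real \<Rightarrow> real" where
  "hf N x f = (\<Sum>i<N. \<Sum>j<N. x i * x j * cos (2*pi*(real i - real j)*f))"

definition Hf :: "nat \<Rightarrow> (nat \<Rightarrow> real) \<Rightarrow> real \<Rightarrow> real" where
  "Hf N x f = (\<Sum>i<N. \<Sum>j<N. x i * x j * Sf (real i - real j) f)"

definition cw :: "real \<Rightarrow> nat \<Rightarrow> nat \<Rightarrow> real" where
  "cw W i j = (if i = j then W else sin (pi*(real i - real j)*W) / (pi*(real i - real j)))"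

lemma Hf_deriv: "((Hf N x) has_real_derivative hf N x f) (at f)"
  unfolding Hf_def hf_def
  by (intro DERIV_sum DERIV_cmult Sf_deriv)

lemma sin_int_diff: "sin (pi * (real i - real j)) = 0"
proof -
  have "real i - real j = of_int (int i - int j)" by simp
  thus ?thesis by (metis sin_npi_int)
qed

lemma Hf_half: "2 * Hf N x (1/2) = ipn N x x"
proof -
  have "Hf N x (1/2) = (\<Sum>i<N. \<Sum>j<N. if i = j then x i * x i / 2 else 0)"
    unfolding Hf_def
  proof (intro sum.cong refl)
    fix i j assume "i \<in> {..<N}" "j \<in> {..<N}"
    show "x i * x j * Sf (real i - real j) (1/2) = (if i = j then x i * x i / 2 else 0)"
    proof (cases "i = j")
      case False
      hence "real i - real j \<noteq> 0" by simp
      moreover have "sin (2 * pi * (real i - real j) * (1/2)) = 0"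
        using sin_int_diff[of i j] by (simp add: mult.commute)
      ultimately show ?thesis using False unfolding Sf_def by simp
    qed (simp add: Sf_def)
  qed
  also have "\<dots> = (\<Sum>i<N. x i * x i / 2)" by simp
  finally show ?thesis unfolding ipn_def by (simp add: sum_divide_distrib[symmetric])
qed

lemma Hf_W: "2 * Hf N x (W/2) = bform N (cw W) x x"
proof -
  have "2 * Hf N x (W/2) = (\<Sum>i<N. \<Sum>j<N. 2 * (x i * x j * Sf (real i - real j) (W/2)))"
    unfolding Hf_def by (simp add: sum_distrib_left)
  also have "\<dots> = bform N (cw W) x x" unfolding bform_def
  proof (intro sum.cong refl)
    fix i j assume "i \<in> {..<N}" "j \<in> {..<N}"
    show "2 * (x i * x j * Sf (real i - real j) (W/2)) = cw W i j * x i * x j"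
    proof (cases "i = j")
      case False
      hence "real i - real j \<noteq> 0" by simp
      have a: "2 * pi * (real i - real j) * (W/2) = pi * (real i - real j) * W" by simp
      have "Sf (real i - real j) (W/2) = sin (pi * (real i - real j) * W) / (2 * pi * (real i - real j))"
        unfolding Sf_def a using False by simp
      thus ?thesis using False \<open>real i - real j \<noteq> 0\<close> unfolding cw_def by (simp add: field_simps)
    qed (simp add: Sf_def cw_def)
  qed
  finally show ?thesis .
qed

lemma cmod_sq_re: "cmod v ^ 2 = Re (v * cnj v)"
  by (subst cmod_power2) (simp add: power2_eq_square)

lemma hf_cmod: "hf N x f = cmod (\<Sum>n<N. of_real (x n) * cis (2*pi*f) ^ n) ^ 2"
proof -
  let ?z = "cis (2*pi*f)"
  have "(\<Sum>n<N. of_real (x n) * ?z ^ n) * cnj (\<Sum>n<N. of_real (x n) * ?z ^ n)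
     = (\<Sum>i<N. \<Sum>j<N. (of_real (x i) * ?z ^ i) * cnj (of_real (x j) * ?z ^ j))"
    by (simp add: sum_product cnj_sum)
  also have "\<dots> = (\<Sum>i<N. \<Sum>j<N. of_real (x i * x j) * cis (2*pi*(real i - real j)*f))"
  proof (intro sum.cong refl)
    fix i j
    have "?z ^ i * cnj (?z ^ j) = cis (2*pi*(real i - real j)*f)"
      by (simp add: DeMoivre cis_cnj cis_mult algebra_simps)
    thus "(of_real (x i) * ?z ^ i) * cnj (of_real (x j) * ?z ^ j) = of_real (x i * x j) * cis (2*pi*(real i - real j)*f)"
      by (simp add: algebra_simps)
  qed
  finally have e: "(\<Sum>n<N. of_real (x n) * ?z ^ n) * cnj (\<Sum>n<N. of_real (x n) * ?z ^ n)
     = (\<Sum>i<N. \<Sum>j<N. of_real (x i * x j) * cis (2*pi*(real i - real j)*f))" .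
  show ?thesis unfolding cmod_sq_re e hf_def by (simp add: Re_sum)
qed



lemma G_deriv:
  assumes f: "f > 0" and k: "k \<ge> 1"
  shows "((\<lambda>f. - c / f ^ k) has_real_derivative c * real k / f ^ (k+1)) (at f)"
proof -
  have "((\<lambda>f. - c / f ^ k) has_real_derivative - (- c * (real k * f ^ (k - 1)) / (f^k * f^k))) (at f)"
    using f by (auto intro!: derivative_eq_intros simp: power2_eq_square)
  moreover have "- (- c * (real k * f ^ (k - 1)) / (f^k * f^k)) = c * real k / f ^ (k+1)"
  proof -
    have e: "(k-1)+(k+1) = k+k" using k by simp
    have "f^k * f^k = f^(k-1) * f^(k+1)" by (simp only: power_add[symmetric] e)
    thus ?thesis using f by (simp add: field_simps)
  qed
  ultimately show ?thesis by simp
qed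

lemma tail_bound:
  fixes x :: "nat \<Rightarrow> real"
  assumes W0: "0 < W" and W1: "W \<le> 1" and p: "p \<ge> 1"
    and hb: "\<And>f. W/2 \<le> f \<Longrightarrow> f \<le> 1/2 \<Longrightarrow> hf N x f \<le> (1/(2*f))^(2*p)"
  shows "ipn N x x - bform N (cw W) x x \<le> 1 / (real (2*p-1) * W^(2*p-1))"
proof -
  define k where "k = 2*p-1"
  have k1: "k \<ge> 1" and kp: "k + 1 = 2*p" using p unfolding k_def by auto
  define c where "c = 1 / (real k * 4^p)"
  define G where "G = (\<lambda>f::real. - c / f ^ k)"
  have "(\<lambda>f. G f - Hf N x f) (W/2) \<le> (\<lambda>f. G f - Hf N x f) (1/2)"
  proof (rule DERIV_nonneg_imp_nondecreasing[of "W/2" "1/2" "\<lambda>f. G f - Hf N x f"])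
    show "W/2 \<le> 1/2" using W1 by simp
  next
    fix f assume f: "W/2 \<le> f" "f \<le> 1/2"
    hence f0: "f > 0" using W0 by simp
    have "((\<lambda>f. G f - Hf N x f) has_real_derivative c * real k / f^(k+1) - hf N x f) (at f)"
      unfolding G_def by (intro DERIV_diff G_deriv f0 k1 Hf_deriv)
    moreover have "c * real k / f^(k+1) = (1/(2*f))^(2*p)"
    proof -
      have "(4::real)^p = 2^(2*p)" by (simp add: power_mult)
      thus ?thesis unfolding c_def kp using k1 f0 by (simp add: power_divide power_mult_distrib)
    qed
    ultimately show "\<exists>y. ((\<lambda>f. G f - Hf N x f) has_real_derivative y) (at f) \<and> 0 \<le> y"
      using hb[OF f] by auto
  qed
  hence "Hf N x (1/2) - Hf N x (W/2) \<le> G (1/2) - G (W/2)" by simp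
  moreover have "G (1/2) \<le> 0" unfolding G_def c_def by simp
  ultimately have "Hf N x (1/2) - Hf N x (W/2) \<le> - G (W/2)" by simp
  hence "ipn N x x - bform N (cw W) x x \<le> - 2 * G (W/2)"
    using Hf_half[of N x] Hf_W[of N x W] by simp
  also have "- 2 * G (W/2) = 1 / (real (2*p-1) * W^(2*p-1))"
  proof -
    have "(4::real)^p = 2 * 2^k" using kp by (metis power_Suc power_mult numeral_Bit0 power2_eq_square mult_2 Suc_eq_plus1 power_add)
    hence "(4::real)^p * (W/2)^k = 2 * W^k" by (simp add: power_divide)
    thus ?thesis unfolding G_def c_def k_def[symmetric] using W0 by (simp add: field_simps)
  qed
  finally show ?thesis .
qed



definition Qp :: "nat \<Rightarrow> nat \<Rightarrow> real poly" where
  "Qp M p = (\<Sum>k<M. monom 1 k) ^ p"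

lemma degree_Qp: "degree (Qp M p) \<le> p * (M - 1)"
proof -
  have "degree (\<Sum>k<M. monom (1::real) k) \<le> M - 1"
    by (intro degree_sum_le) (auto simp: degree_monom_eq)
  hence "degree (Qp M p) \<le> (M - 1) * p" unfolding Qp_def
    using degree_power_le[of "\<Sum>k<M. monom (1::real) k" p] by (meson le_trans mult_le_mono1)
  thus ?thesis by (simp add: mult.commute)
qed

lemma poly_lt: fixes P :: "'a::comm_semiring_1 poly" assumes "degree P < N" shows "poly P z = (\<Sum>i<N. coeff P i * z ^ i)"
  unfolding poly_altdef
  by (rule sum.mono_neutral_left) (use assms in \<open>auto simp: coeff_eq_0\<close>)

interpretation ofr: map_poly_comm_ring_hom "of_real :: real \<Rightarrow> complex" ..

lemma Qp_V:
  assumes "degree (Qp M p) < N"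
  shows "(\<Sum>n<N. of_real (coeff (Qp M p) n) * z ^ n) = (\<Sum>k<M. z ^ k :: complex) ^ p"
proof -
  have "poly (map_poly of_real (Qp M p)) z = (\<Sum>k<M. z ^ k) ^ p"
    unfolding Qp_def ofr.hom_power ofr.hom_sum by (simp add: poly_sum poly_monom)
  moreover have "poly (map_poly of_real (Qp M p)) z = (\<Sum>n<N. of_real (coeff (Qp M p) n) * z ^ n)"
    using assms by (subst poly_lt[of _ N]) auto
  ultimately show ?thesis by simp
qed

lemma Qp_sum:
  assumes "degree (Qp M p) < N"
  shows "(\<Sum>n<N. coeff (Qp M p) n) = real M ^ p"
proof -
  have "poly (Qp M p) 1 = real M ^ p"
    unfolding Qp_def by (simp add: poly_sum poly_monom)
  thus ?thesis using poly_lt[OF assms, of 1] by simp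
qed

lemma cs_ineq: "(\<Sum>i<N. x i)^2 \<le> real N * ipn N x x"
  using sum_squared_le_sum_of_squares[of x "{..<N}"] unfolding ipn_def
  by (simp add: power2_eq_square mult.commute)



lemma ln2_ge: "1/2 \<le> ln (2::real)"
proof -
  have "exp (1/2::real) ^ 2 = exp 1" by (simp add: exp_of_nat_mult[symmetric] power2_eq_square exp_add[symmetric])
  hence "exp (1/2::real) ^ 2 \<le> 2^2" using exp_le by simp
  hence "exp (1/2::real) \<le> 2" by (rule power2_le_imp_le) simp
  thus ?thesis by (metis exp_gt_zero exp_le_cancel_iff exp_ln zero_less_numeral)
qed

lemma dpss_props:
  fixes N K :: nat
  assumes N: "N > 0"
  defines "W \<equiv> (2 * real K + 1) / real N"
  shows "dpss_kernel N K \<in> carrier_mat N N"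
    and "\<And>i j. i < N \<Longrightarrow> j < N \<Longrightarrow> dpss_kernel N K $$ (i,j) = cw W i j"
    and "\<And>i j. i < N \<Longrightarrow> j < N \<Longrightarrow> dpss_kernel N K $$ (i,j) = dpss_kernel N K $$ (j,i)"
proof -
  show "dpss_kernel N K \<in> carrier_mat N N" unfolding dpss_kernel_def by simp
  show "dpss_kernel N K $$ (i,j) = cw W i j" if "i < N" "j < N" for i j
    using that unfolding dpss_kernel_def cw_def W_def by (simp add: times_divide_eq_right)
  show "dpss_kernel N K $$ (i,j) = dpss_kernel N K $$ (j,i)" if "i < N" "j < N" for i j
  proof -
    have "sin (pi * (real j - real i) * (2 * real K + 1) / real N) / (pi * (real j - real i))
        = sin (pi * (real i - real j) * (2 * real K + 1) / real N) / (pi * (real i - real j))"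
    proof -
      have "pi * (real j - real i) * (2 * real K + 1) = - (pi * (real i - real j) * (2 * real K + 1))"
        by (simp add: algebra_simps)
      hence "pi * (real j - real i) * (2 * real K + 1) / real N = - (pi * (real i - real j) * (2 * real K + 1) / real N)"
        by (simp only: minus_divide_left)
      moreover have "pi * (real j - real i) = - (pi * (real i - real j))" by (simp add: algebra_simps)
      ultimately show ?thesis by (simp only: sin_minus) simp
    qed
    thus ?thesis using that unfolding dpss_kernel_def by auto
  qed
qed

lemma main_bound:
  fixes eps :: real and l m :: nat
  assumes e0: "0 < eps" and m2: "m \<ge> 2" and eK: "eps * 2 ^ (2 ^ (m - 1) - 1) \<ge> 1"
  defines "N \<equiv> (2::nat) ^ (l + m)"
  defines "K \<equiv> (2::nat) ^ (m - 1) - 1"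
  shows "lambda_max (dpss_kernel N K) \<ge> 1 - eps"
proof -
  define M :: nat where "M = 2 ^ (l + 2)"
  define p :: nat where "p = 2 ^ (m - 2)"
  define W where "W = (2 * real K + 1) / real N"
  define x where "x = coeff (Qp M p)"
  have N0: "N > 0" unfolding N_def by simp
  have M1: "M \<ge> 1" and p1: "p \<ge> 1" unfolding M_def p_def by auto
  obtain q where mq: "m = q + 2" using m2 by (metis add.commute le_Suc_ex)
  have pM: "p * M = N" unfolding p_def M_def N_def mq by (simp add: power_add[symmetric] add.commute)
  have K2p: "K = 2 * p - 1" unfolding K_def p_def mq by simp
  have Kreal: "real K = 2 ^ (q+1) - 1"
  proof -
    have "(1::nat) \<le> 2 ^ (q+1)" by simp
    thus ?thesis unfolding K_def mq by (simp add: of_nat_diff)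
  qed
  have Kr: "2 * real K + 1 = 2 ^ m - 1" unfolding Kreal mq by simp
  have W0: "W > 0" unfolding W_def using Kr N0 by simp
  have W1: "W \<le> 1"
  proof -
    have "(2::real) ^ m \<le> 2 ^ (l + m)" by (intro power_increasing) auto
    hence h: "(2::real) ^ m - 1 \<le> 2 ^ (l + m)" by linarith
    have "W = ((2::real) ^ m - 1) / 2 ^ (l + m)" unfolding W_def Kr N_def by simp
    thus ?thesis using h by (simp only: divide_le_eq_1) simp
  qed
  have MW: "real M * W \<ge> 2"
  proof -
    have e: "real M * W = 4 * (2^m - 1) / 2^m" unfolding W_def Kr M_def N_def
      by (simp add: power_add)
    have "(2::real)^2 \<le> 2^m" by (rule power_increasing) (use m2 in auto)
    moreover have "(2::real) \<le> 2^2" by simp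
    ultimately have "(2::real)^m \<ge> 2" by linarith
    thus ?thesis unfolding e by (simp add: field_simps)
  qed
  have deg: "degree (Qp M p) < N"
  proof -
    have "p * (M - 1) < p * M" using M1 p1 by simp
    thus ?thesis using degree_Qp[of M p] pM by linarith
  qed
  have hb: "hf N x f \<le> (1/(2*f))^(2*p)" if f: "W/2 \<le> f" "f \<le> 1/2" for f
  proof -
    have f0: "f > 0" using f W0 by simp
    have "hf N x f = cmod ((\<Sum>k<M. cis (2*pi*f) ^ k) ^ p) ^ 2"
      unfolding hf_cmod x_def Qp_V[OF deg] ..
    also have "\<dots> = cmod (\<Sum>k<M. cis (2*pi*f) ^ k) ^ (2*p)"
      by (simp add: norm_power power_mult[symmetric] mult.commute)
    also have "\<dots> \<le> (1/(2*f))^(2*p)"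
      by (intro power_mono dirichlet_bound f0 f) simp
    finally show ?thesis .
  qed
  have tail: "ipn N x x - bform N (cw W) x x \<le> 1 / (real (2*p-1) * W^(2*p-1))"
    by (rule tail_bound[OF W0 W1 p1 hb])
  have en: "real M ^ (2*p) / real N \<le> ipn N x x"
  proof -
    have "(\<Sum>n<N. x n) = real M ^ p" unfolding x_def by (rule Qp_sum[OF deg])
    hence "(real M ^ p)^2 \<le> real N * ipn N x x" using cs_ineq[of x N] by simp
    thus ?thesis using N0 by (simp add: divide_le_eq power_mult[symmetric] mult.commute)
  qed
  have ipos: "ipn N x x > 0"
  proof -
    have "real M ^ (2*p) / real N > 0" using N0 M1 by simp
    thus ?thesis using en by linarith
  qed
  have tail2: "1 / (real (2*p-1) * W^(2*p-1)) \<le> eps * ipn N x x"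
  proof -
    let ?k = "2*p-1"
    have k1: "?k \<ge> 1" and kp: "?k + 1 = 2*p" using p1 by auto
    have "real p \<le> real ?k" using p1 by simp
    have "2 ^ ?k \<le> (real M * W) ^ ?k" using MW by (intro power_mono) auto
    hence "eps * 2 ^ ?k \<le> eps * (real M * W) ^ ?k" using e0 by (intro mult_left_mono) auto
    moreover have "eps * 2 ^ ?k \<ge> 1" using eK K2p unfolding K_def by simp
    ultimately have b: "eps * (real M * W) ^ ?k \<ge> 1" by linarith
    have "real p * 1 \<le> real ?k * (eps * (real M * W) ^ ?k)"
      using \<open>real p \<le> real ?k\<close> b by (intro mult_mono) auto
    hence a: "real p \<le> eps * real ?k * (real M * W) ^ ?k" by (simp add: mult_ac)
    have "1 / (real ?k * W^?k) = real p / (real ?k * W^?k * real p)" using p1 by simp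
    also have "\<dots> \<le> eps * real ?k * (real M * W) ^ ?k / (real ?k * W^?k * real p)"
      using a k1 W0 p1 by (intro divide_right_mono) auto
    also have "\<dots> = eps * real M ^ ?k / real p"
      using k1 W0 p1 by (simp add: power_mult_distrib field_simps)
    also have "\<dots> = eps * (real M ^ (2*p) / real N)"
    proof -
      have "real M ^ (2*p) = real M ^ ?k * real M" using kp by (metis power_Suc2 Suc_eq_plus1)
      thus ?thesis unfolding pM[symmetric] using M1 p1 by (simp add: field_simps)
    qed
    also have "\<dots> \<le> eps * ipn N x x" using en e0 by (intro mult_left_mono) auto
    finally show ?thesis .
  qed
  have bf: "bform N (cw W) x x \<ge> (1 - eps) * ipn N x x"
    using tail tail2 by (simp add: algebra_simps)
  have A: "dpss_kernel N K \<in> carrier_mat N N" using dpss_props(1)[OF N0, where K=K] .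
  have Aent: "\<And>i j. i < N \<Longrightarrow> j < N \<Longrightarrow> dpss_kernel N K $$ (i,j) = cw W i j"
    using dpss_props(2)[OF N0, where K=K] unfolding W_def by blast
  have Asym: "\<And>i j. i < N \<Longrightarrow> j < N \<Longrightarrow> dpss_kernel N K $$ (i,j) = dpss_kernel N K $$ (j,i)"
    using dpss_props(3)[OF N0, where K=K] by blast
  have "bform N (\<lambda>i j. dpss_kernel N K $$ (i,j)) x x = bform N (cw W) x x"
    unfolding bform_def by (intro sum.cong refl) (simp add: Aent)
  hence "bform N (cw W) x x / ipn N x x \<le> lambda_max (dpss_kernel N K)"
    using rayleigh_eig[OF A N0 _ ipos] Asym by auto
  moreover have "1 - eps \<le> bform N (cw W) x x / ipn N x x"
    using bf ipos by (simp add: le_divide_eq)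
  ultimately show ?thesis by linarith
qed



theorem theorem2:
  fixes eps :: real and l :: nat
  assumes "0 < eps" and "eps < 1"
  defines "m \<equiv> nat (\<lceil>log 2 (real_of_int (\<lceil>175 * (ln (10 / eps) + 1) ^ 2\<rceil>) + 1)\<rceil> + 1)"
  defines "N \<equiv> (2::nat) ^ (l + m)"
  defines "K \<equiv> (2::nat) ^ (m - 1) - 1"
  shows "lambda_max (dpss_kernel N K) \<ge> 1 - eps"
proof -
  define L where "L = ln (10 / eps)"
  define X where "X = real_of_int (\<lceil>175 * (L + 1) ^ 2\<rceil>) + 1"
  define c where "c = \<lceil>log 2 X\<rceil>"
  have e0: "0 < eps" by fact
  have L0: "L \<ge> 0" unfolding L_def using e0 assms(2) by simp
  have X1: "X \<ge> 175 * (L + 1) ^ 2 + 1" unfolding X_def by linarith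
  have X2: "X \<ge> 2"
  proof -
    have "(L+1)^2 \<ge> 1" using L0 by simp
    thus ?thesis using X1 by linarith
  qed
  have mc: "m = nat (c + 1)" unfolding m_def c_def X_def L_def ..
  have "log 2 X \<ge> 1" using X2 by (simp add: le_log_iff)
  hence c1: "c \<ge> 1" unfolding c_def by linarith
  have m2: "m \<ge> 2" using c1 mc by linarith
  have m1: "m - 1 = nat c" using c1 mc by linarith
  have "X = 2 powr (log 2 X)" using X2 by simp
  also have "\<dots> \<le> 2 powr (real_of_int c)" unfolding c_def by (intro powr_mono) auto
  also have "2 powr (real_of_int c) = 2 ^ nat c"
    using c1 powr_realpow[of 2 "nat c"] by simp
  finally have X2m: "X \<le> 2 ^ (m - 1)" unfolding m1 .
  define k where "k = (2::nat) ^ (m - 1) - 1"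
  have kr: "real k = 2 ^ (m - 1) - 1"
  proof -
    have "(1::nat) \<le> 2 ^ (m-1)" by simp
    thus ?thesis unfolding k_def by (simp add: of_nat_diff)
  qed
  have kL: "real k \<ge> 175 * (L + 1) ^ 2" using kr X2m X1 by linarith
  have "(L + 1)^2 \<ge> L + 1" using L0 by (simp add: power2_eq_square)
  hence kL2: "real k * (1/2) \<ge> L" using kL L0 by linarith
  have "- ln eps \<le> L" unfolding L_def using e0 by (simp add: ln_div)
  also have "L \<le> real k * ln 2" using kL2 ln2_ge
    by (meson mult_left_mono of_nat_0_le_iff order_trans)
  finally have "exp (- ln eps) \<le> exp (real k * ln 2)" by simp
  moreover have "exp (real k * ln 2) = 2 ^ k" by (simp add: exp_of_nat_mult)
  ultimately have "1 / eps \<le> 2 ^ k" using e0 by (simp add: exp_minus divide_inverse)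
  hence eK: "eps * 2 ^ k \<ge> 1" using e0 by (simp add: divide_le_eq mult.commute)
  show ?thesis unfolding N_def K_def
    by (rule main_bound[OF e0 m2 eK[unfolded k_def]])
qed


end
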